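(* Assume the standing setting below with $I\ge 2$ and fix arbitrary parameters $0<\beta\le 1$, $\lambda\ge 1$, $0<\mu\le 1$. (i) (High reference point $R_p=0$.) The supremum of $U(b,\cdot)$ over $[0,\infty)$ is attained, and it is attained at some point of the finite set $\{d_i-Q:\ i=\hat\imath+1,\ldots,I\}\cup\{0\}$; i.e. an optimal buying quantity is $$q_b^*=\arg\max_{q_b\in\{d_i-Q,\ i=\hat\imath+1,\ldots,I\}\cup\{0\}} U(b,q_b).$$ (ii) (Low reference point $R_p=\kappa(Q-d_I)$.) Let $\mathcal X_b$ be the set of points $q_b>0$ at which $U(b,\cdot)$ (computed with $R_p=\kappa(Q-d_I)$) is differentiable with $\partial U(b,q_b)/\partial q_b=0$. Then the supremum of $U(b,\cdot)$ over $[0,\infty)$ is attained at some point of $\{d_i-Q:\ i=\hat\imath+1,\ldots,I\}\cup\mathcal X_b\cup\{0\}$; i.e. $$q_b^*=\arg\max_{q_b\in\{d_i-Q,\ i=\hat\imath+1,\ldots,I\}\cup\mathcal X_b\cup\{0\}} U(b,q_b).$$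
   Context: Standing setting. Let $\kappa>0$ and $Q>0$. The future demand $d$ takes values $d_1<d_2<\cdots<d_I$ ($I\ge2$) with $\mathbb P(d=d_i)=p_i>0$, $\sum_i p_i=1$, and $d_1<Q<d_I$; let $\hat\imath$ be the index with $d_{\hat\imath}<Q\le d_{\hat\imath+1}$. The satisfaction loss is $L(y)=0$ if $y\ge0$ and $L(y)=\kappa y$ if $y<0$. For parameters $0<\beta\le1$, $\lambda\ge1$, the value function is $v(x)=x^\beta$ for $x\ge0$ and $v(x)=-\lambda(-x)^\beta$ for $x<0$. For $0<\mu\le1$ the probability weighting is $w(p)=\exp(-(-\ln p)^\mu)$ for $p\in(0,1]$. Prices satisfy $0<\pi_s^{\min}<\kappa$ and $0<\pi_b^{\max}<\kappa$. For a reference point $R_p\in\mathbb R$, the buyer's utility of buying $q_b\ge0$ is $U(b,q_b)=\sum_{i=1}^I w(p_i)\,v\big(-\pi_s^{\min}q_b+L(Q+q_b-d_i)-R_p\big)$ and the seller's utility of selling $q_s\ge0$ is $U(s,q_s)=\sum_{i=1}^I w(p_i)\,v\big(\pi_b^{\max}q_s+L(Q-q_s-d_i)-R_p\big)$. *)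

theory Defs
  imports Complex_Main
begin

definition sat_loss :: "real \<Rightarrow> real \<Rightarrow> real" where
  "sat_loss kappa y = (if y \<ge> 0 then 0 else kappa * y)"

definition pt_value :: "real \<Rightarrow> real \<Rightarrow> real \<Rightarrow> real" where
  "pt_value beta lam x = (if x \<ge> 0 then x powr beta else - lam * ((- x) powr beta))"

definition prob_weight :: "real \<Rightarrow> real \<Rightarrow> real" where
  "prob_weight mu p = exp (- ((- ln p) powr mu))"

definition buyer_utility ::
  "real \<Rightarrow> real \<Rightarrow> real \<Rightarrow> real \<Rightarrow> real \<Rightarrow> nat \<Rightarrow> (nat \<Rightarrow> real) \<Rightarrow> (nat \<Rightarrow> real)
   \<Rightarrow> real \<Rightarrow> real \<Rightarrow> real \<Rightarrow> real" where
  "buyer_utility kappa beta lam mu Q I d p pi_s_min Rp qb =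
     (\<Sum>i=1..I. prob_weight mu (p i) *
        pt_value beta lam (- pi_s_min * qb + sat_loss kappa (Q + qb - d i) - Rp))"

end

theory Submission
  imports Defs "HOL-Analysis.Analysis"
begin

lemma pt_value_alt: "0 < beta \<Longrightarrow> pt_value beta lam x = (max x 0) powr beta - lam * (max (-x) 0) powr beta"
  by (auto simp: pt_value_def max_def)

lemma pt_value_cont: "0 < beta \<Longrightarrow> continuous_on UNIV (pt_value beta lam)"
proof -
  assume b: "0 < beta"
  have "continuous_on UNIV (\<lambda>x. (max x 0) powr beta - lam * (max (-x) 0) powr beta)"
    using b by (intro continuous_intros continuous_on_powr') auto
  then show ?thesis using pt_value_alt[OF b] by (simp add: fun_eq_iff)
qed

lemma sat_loss_alt: "sat_loss k y = k * min y 0"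
  by (auto simp: sat_loss_def min_def)

lemma pt_value_mono: "0 < beta \<Longrightarrow> 0 \<le> lam \<Longrightarrow> x \<le> y \<Longrightarrow> pt_value beta lam x \<le> pt_value beta lam y"
proof -
  assume b: "0 < beta" and l: "0 \<le> lam" and xy: "x \<le> y"
  show ?thesis
  proof (cases "0 \<le> x")
    case True then show ?thesis using xy b by (auto simp: pt_value_def intro: powr_mono2)
  next
    case False
    show ?thesis
    proof (cases "0 \<le> y")
      case True
      have "0 \<le> lam * (- x) powr beta" "0 \<le> y powr beta" using l by auto
      moreover have "pt_value beta lam x = - (lam * (- x) powr beta)" "pt_value beta lam y = y powr beta"
        using False True by (auto simp: pt_value_def)
      ultimately show ?thesis by linarith
    next
      case F2: False
      have "(-y) powr beta \<le> (-x) powr beta" using F2 xy b by (intro powr_mono2) auto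
      then show ?thesis using False F2 l by (auto simp: pt_value_def intro: mult_left_mono)
    qed
  qed
qed

lemma pw_pos: "prob_weight mu p > 0"
  by (simp add: prob_weight_def)

lemma U_cont: "0 < beta \<Longrightarrow> continuous_on UNIV (buyer_utility kappa beta lam mu Q I d p pis R)"
proof -
  assume b: "0 < beta"
  have c: "continuous_on UNIV (\<lambda>q. sat_loss kappa (Q + q - d i))" for i
    unfolding sat_loss_alt by (intro continuous_intros)
  show ?thesis unfolding buyer_utility_def
    apply (intro continuous_intros)
    apply (rule continuous_on_compose2[OF pt_value_cont[OF b]])
    using c by (auto intro!: continuous_intros)
qed

lemma U_tail:
  assumes "\<And>i. i \<in> {1..I} \<Longrightarrow> d i \<le> Q + q" "q \<le> q'" "0 \<le> pis" "0 < beta" "0 \<le> lam"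
  shows "buyer_utility kappa beta lam mu Q I d p pis R q' \<le> buyer_utility kappa beta lam mu Q I d p pis R q"
  unfolding buyer_utility_def
proof (rule sum_mono)
  fix i assume i: "i \<in> {1..I}"
  have "pt_value beta lam (- pis * q' + sat_loss kappa (Q + q' - d i) - R)
      \<le> pt_value beta lam (- pis * q + sat_loss kappa (Q + q - d i) - R)"
    using assms(1)[OF i] assms(2-5)
    by (intro pt_value_mono) (auto simp: sat_loss_def intro: mult_left_mono)
  then show "prob_weight mu (p i) * pt_value beta lam (- pis * q' + sat_loss kappa (Q + q' - d i) - R)
      \<le> prob_weight mu (p i) * pt_value beta lam (- pis * q + sat_loss kappa (Q + q - d i) - R)"
    using pw_pos[of mu "p i"] by (intro mult_left_mono) auto
qed

lemma concave_powr_pos: "0 < beta \<Longrightarrow> beta \<le> 1 \<Longrightarrow> concave_on {0<..} (\<lambda>x::real. x powr beta)"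
proof (rule f''_le0_imp_concave[where f'="\<lambda>x. beta * x powr (beta - 1)" and f''="\<lambda>x. beta * ((beta - 1) * x powr (beta - 1 - 1))"])
  fix x :: real assume "0 < beta" "beta \<le> 1" "x \<in> {0<..}"
  then show "DERIV (\<lambda>x. x powr beta) x :> beta * x powr (beta - 1)"
    "DERIV (\<lambda>x. beta * x powr (beta - 1)) x :> beta * ((beta - 1) * x powr (beta - 1 - 1))"
    "beta * ((beta - 1) * x powr (beta - 1 - 1)) \<le> 0"
  proof -
    show "DERIV (\<lambda>x. x powr beta) x :> beta * x powr (beta - 1)"
      using \<open>x \<in> {0<..}\<close> by (auto intro!: has_real_derivative_powr)
    show "DERIV (\<lambda>x. beta * x powr (beta - 1)) x :> beta * ((beta - 1) * x powr (beta - 1 - 1))"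
      using \<open>x \<in> {0<..}\<close> by (intro DERIV_cmult has_real_derivative_powr) auto
    have "(beta - 1) * x powr (beta - 1 - 1) \<le> 0"
      using \<open>beta \<le> 1\<close> by (intro mult_nonpos_nonneg) auto
    then show "beta * ((beta - 1) * x powr (beta - 1 - 1)) \<le> 0"
      using \<open>0 < beta\<close> by (metis less_imp_le mult_nonneg_nonpos)
  qed
qed simp

lemma concave_powr0: "0 < beta \<Longrightarrow> beta \<le> 1 \<Longrightarrow> concave_on {0..} (\<lambda>x::real. x powr beta)"
proof (rule concave_on_linorderI)
  assume b: "0 < beta" "beta \<le> 1"
  fix t x y :: real
  assume t: "0 < t" "t < 1" and xy: "x \<in> {0..}" "y \<in> {0..}" "x < y"
  show "(1 - t) * x powr beta + t * y powr beta \<le> ((1 - t) *\<^sub>R x + t *\<^sub>R y) powr beta"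
  proof (cases "x = 0")
    case True
    have "t powr 1 \<le> t powr beta" using t b by (intro powr_mono') auto
    then have "t * y powr beta \<le> t powr beta * y powr beta" using t by (intro mult_right_mono) auto
    also have "\<dots> = (t * y) powr beta" by (simp add: powr_mult)
    finally show ?thesis using True b by simp
  next
    case False
    then have "x \<in> {0<..}" "y \<in> {0<..}" using xy by auto
    from concave_onD[OF concave_powr_pos[OF b], of t x y] this t
    show ?thesis by simp
  qed
qed (simp)

lemma convex_piece:
  fixes w alpha s :: "nat \<Rightarrow> real"
  assumes "finite S" "0 \<le> lam" "0 < beta" "beta \<le> 1" "\<And>i. i \<in> S \<Longrightarrow> 0 \<le> w i"
    and "\<And>i q. i \<in> S \<Longrightarrow> q \<in> {a..c} \<Longrightarrow> 0 \<le> alpha i + s i * q"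
  shows "convex_on {a..c} (\<lambda>q. \<Sum>i\<in>S. w i * (- lam * (alpha i + s i * q) powr beta))"
proof -
  have conc: "concave_on {a..c} (\<lambda>q. (alpha i + s i * q) powr beta)" if i: "i \<in> S" for i
  proof (rule concave_on_linorderI)
    fix t x y :: real
    assume t: "0 < t" "t < 1" and xy: "x \<in> {a..c}" "y \<in> {a..c}" "x < y"
    have "alpha i + s i * ((1 - t) *\<^sub>R x + t *\<^sub>R y) = (1 - t) *\<^sub>R (alpha i + s i * x) + t *\<^sub>R (alpha i + s i * y)"
      by (simp add: algebra_simps)
    moreover have "alpha i + s i * x \<in> {0..}" "alpha i + s i * y \<in> {0..}" using assms(6)[OF i] xy by auto
    ultimately show "(1 - t) * (alpha i + s i * x) powr beta + t * (alpha i + s i * y) powr beta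
        \<le> (alpha i + s i * ((1 - t) *\<^sub>R x + t *\<^sub>R y)) powr beta"
      using concave_onD[OF concave_powr0[OF assms(3,4)], of t] t by simp
  qed (simp)
  have "convex_on {a..c} (\<lambda>q. \<Sum>i\<in>S'. w i * (- lam * (alpha i + s i * q) powr beta))" if "S' \<subseteq> S" for S'
    using finite_subset[OF that assms(1)] that
  proof (induction S' rule: finite_induct)
    case empty then show ?case by (simp add: convex_on_const)
  next
    case (insert i F)
    have i: "i \<in> S" using insert by auto
    have "convex_on {a..c} (\<lambda>q. (w i * lam) * (- ((alpha i + s i * q) powr beta)))"
      using conc[OF i] assms(2) assms(5)[OF i] by (intro convex_on_cmul) (auto simp: concave_on_def)
    then have "convex_on {a..c} (\<lambda>q. w i * (- lam * (alpha i + s i * q) powr beta))"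
      by (simp add: algebra_simps)
    moreover have "convex_on {a..c} (\<lambda>q. \<Sum>i\<in>F. w i * (- lam * (alpha i + s i * q) powr beta))"
      using insert by auto
    ultimately have "convex_on {a..c} (\<lambda>q. w i * (- lam * (alpha i + s i * q) powr beta) + (\<Sum>i\<in>F. w i * (- lam * (alpha i + s i * q) powr beta)))"
      by (rule convex_on_add)
    then show ?case using insert by simp
  qed
  then show ?thesis by simp
qed

lemma bracket:
  fixes B :: "real set"
  assumes "finite B" "0 \<in> B" "D \<in> B" "0 \<le> m" "m \<le> D" "m \<notin> B"
  shows "\<exists>a c. a \<in> B \<and> c \<in> B \<and> 0 \<le> a \<and> a < m \<and> m < c \<and> c \<le> D \<and> (\<forall>b\<in>B. b \<le> a \<or> c \<le> b)"
proof -
  have m0: "0 < m" using assms by (cases "m = 0") auto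
  have mD: "m < D" using assms by (cases "m = D") auto
  define L where "L = {b\<in>B. b < m}"
  define H where "H = {b\<in>B. m < b}"
  have fL: "finite L" "L \<noteq> {}" using assms m0 by (auto simp: L_def intro!: exI[of _ 0])
  have fH: "finite H" "H \<noteq> {}" using assms mD by (auto simp: H_def)
  define a where "a = Max L"
  define c where "c = Min H"
  have aL: "a \<in> L" using fL by (simp add: a_def)
  have cH: "c \<in> H" using fH by (simp add: c_def)
  have "0 \<le> a" using fL assms m0 by (auto simp: a_def L_def intro!: Max_ge_iff[THEN iffD2])
  moreover have "c \<le> D" using fH assms mD unfolding c_def H_def by (intro Min_le) auto
  moreover have "\<forall>b\<in>B. b \<le> a \<or> c \<le> b"
  proof
    fix b assume b: "b \<in> B"
    show "b \<le> a \<or> c \<le> b"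
    proof (cases "b < m")
      case True then have "b \<in> L" using b by (simp add: L_def)
      then show ?thesis using fL by (simp add: a_def)
    next
      case False then have "b \<in> H" using b assms by (cases "b = m") (auto simp: H_def)
      then show ?thesis using fH by (simp add: c_def)
    qed
  qed
  ultimately show ?thesis using aL cH by (auto simp: L_def H_def)
qed

lemma exists_max:
  fixes f :: "real \<Rightarrow> real"
  assumes "continuous_on {0..D} f" "0 \<le> D" "\<And>q. q \<ge> D \<Longrightarrow> f q \<le> f D"
  shows "\<exists>m\<in>{0..D}. \<forall>q\<ge>0. f q \<le> f m"
proof -
  obtain m where m: "m \<in> {0..D}" "\<And>y. y \<in> {0..D} \<Longrightarrow> f y \<le> f m"
    using continuous_attains_sup[OF compact_Icc _ assms(1)] assms(2) by auto
  have "f q \<le> f m" if "q \<ge> 0" for q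
  proof (cases "q \<le> D")
    case True then show ?thesis using m that by auto
  next
    case False
    then have "f q \<le> f D" using assms(3) by auto
    also have "\<dots> \<le> f m" using m assms(2) by auto
    finally show ?thesis .
  qed
  then show ?thesis using m(1) by blast
qed

lemma pt_value_neg: "x \<le> 0 \<Longrightarrow> 0 < beta \<Longrightarrow> pt_value beta lam x = - lam * (- x) powr beta"
  by (cases "x = 0") (auto simp: pt_value_def)

lemma pt_value_pos: "x \<ge> 0 \<Longrightarrow> pt_value beta lam x = x powr beta"
  by (simp add: pt_value_def)

theorem theorem1:
  fixes kappa Q beta lam mu pi_s_min pi_b_max :: real
    and I ihat :: nat
    and d p :: "nat \<Rightarrow> real"
  assumes kappa_pos: "kappa > 0"
    and Q_pos: "Q > 0"
    and I_ge: "I \<ge> 2"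
    and d_strict: "\<And>i j. 1 \<le> i \<Longrightarrow> i < j \<Longrightarrow> j \<le> I \<Longrightarrow> d i < d j"
    and p_pos: "\<And>i. 1 \<le> i \<Longrightarrow> i \<le> I \<Longrightarrow> p i > 0"
    and p_sum: "(\<Sum>i=1..I. p i) = 1"
    and Q_range: "d 1 < Q" "Q < d I"
    and ihat_range: "1 \<le> ihat" "ihat < I"
    and ihat_def: "d ihat < Q" "Q \<le> d (ihat + 1)"
    and beta: "0 < beta" "beta \<le> 1"
    and lam: "lam \<ge> 1"
    and mu: "0 < mu" "mu \<le> 1"
    and pis: "0 < pi_s_min" "pi_s_min < kappa"
    and pib: "0 < pi_b_max" "pi_b_max < kappa"
  shows
    "(let U = buyer_utility kappa beta lam mu Q I d p pi_s_min 0 in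
       \<exists>qstar \<in> {d i - Q | i. ihat + 1 \<le> i \<and> i \<le> I} \<union> {0}.
          qstar \<ge> 0 \<and> (\<forall>qb \<ge> 0. U qb \<le> U qstar))
     \<and>
     (let U = buyer_utility kappa beta lam mu Q I d p pi_s_min (kappa * (Q - d I));
          Xb = {qb. qb > 0 \<and> (U has_real_derivative 0) (at qb)} in
       \<exists>qstar \<in> {d i - Q | i. ihat + 1 \<le> i \<and> i \<le> I} \<union> Xb \<union> {0}.
          qstar \<ge> 0 \<and> (\<forall>qb \<ge> 0. U qb \<le> U qstar))"
proof -
  let ?U0 = "buyer_utility kappa beta lam mu Q I d p pi_s_min 0"
  let ?U1 = "buyer_utility kappa beta lam mu Q I d p pi_s_min (kappa * (Q - d I))"
  define B where "B = (\<lambda>i. d i - Q) ` {ihat+1..I} \<union> {0}"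
  define D where "D = d I - Q"
  have Bset: "{d i - Q | i. ihat + 1 \<le> i \<and> i \<le> I} \<union> {0} = B" by (auto simp: B_def)
  have dmono: "d i \<le> d j" if "1 \<le> i" "i \<le> j" "j \<le> I" for i j
    using d_strict[of i j] that by (cases "i = j") auto
  have finB: "finite B" by (simp add: B_def)
  have B0: "0 \<in> B" by (simp add: B_def)
  have BD: "D \<in> B" using ihat_range by (auto simp: B_def D_def)
  have Brange: "0 \<le> b \<and> b \<le> D" if bB: "b \<in> B" for b
  proof (cases "b = 0")
    case True then show ?thesis using Q_range by (simp add: D_def)
  next
    case False
    then obtain i where i: "ihat + 1 \<le> i" "i \<le> I" "b = d i - Q" using bB by (auto simp: B_def)
    have "d (ihat+1) \<le> d i" "d i \<le> d I" using i dmono[of "ihat+1" i] dmono[of i I] by auto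
    then show ?thesis using i ihat_def by (simp add: D_def)
  qed
  have D0: "0 \<le> D" using Q_range by (simp add: D_def)
  have key: "d i - Q \<le> a \<or> c \<le> d i - Q"
    if i: "1 \<le> i" "i \<le> I" and ac: "\<forall>b\<in>B. b \<le> a \<or> c \<le> b" "0 \<le> a" for i a c
  proof (cases "i \<le> ihat")
    case True
    then have "d i \<le> d ihat" using dmono[of i ihat] i ihat_range by auto
    then show ?thesis using ihat_def ac by auto
  next
    case False
    then have "d i - Q \<in> B" using i by (auto simp: B_def)
    then show ?thesis using ac by auto
  qed
  have tail: "buyer_utility kappa beta lam mu Q I d p pi_s_min R q \<le> buyer_utility kappa beta lam mu Q I d p pi_s_min R D"
    if "q \<ge> D" for q R
    using that pis beta lam dmono[of _ I] by (intro U_tail) (auto simp: D_def)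
  have cont: "continuous_on {0..D} (buyer_utility kappa beta lam mu Q I d p pi_s_min R)" for R
    using U_cont[OF beta(1)] continuous_on_subset by blast
  have w0: "0 \<le> prob_weight mu (p i)" for i using pw_pos[of mu "p i"] by simp
  have eqset: "{d i - Q | i. ihat + 1 \<le> i \<and> i \<le> I} \<union> X \<union> {0} = B \<union> X" for X
    by (auto simp: B_def)
  show ?thesis unfolding Let_def eqset Bset
  proof (rule conjI)
    obtain m where m: "m \<in> {0..D}" "\<And>q. q \<ge> 0 \<Longrightarrow> ?U0 q \<le> ?U0 m"
      using exists_max[OF cont D0 tail] by blast
    show "\<exists>qstar\<in>B. 0 \<le> qstar \<and> (\<forall>qb\<ge>0. ?U0 qb \<le> ?U0 qstar)"
    proof (cases "m \<in> B")
      case True then show ?thesis using m by auto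
    next
      case False
      obtain a c where ac: "a \<in> B" "c \<in> B" "0 \<le> a" "a < m" "m < c" "c \<le> D" "\<forall>b\<in>B. b \<le> a \<or> c \<le> b"
        using bracket[OF finB B0 BD _ _ False] m(1) by auto
      define s where "s i = (if d i - Q \<le> a then pi_s_min else pi_s_min - kappa)" for i
      define al where "al i = (if d i - Q \<le> a then 0 else kappa * (d i - Q))" for i
      define G where "G q = (\<Sum>i=1..I. prob_weight mu (p i) * (- lam * (al i + s i * q) powr beta))" for q
      have nonneg: "0 \<le> al i + s i * q" if i: "i \<in> {1..I}" and q: "q \<in> {a..c}" for i q
      proof (cases "d i - Q \<le> a")
        case True then show ?thesis using q ac pis by (simp add: s_def al_def)
      next
        case False
        then have "q \<le> d i - Q" using key[of i a c] i ac q by auto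
        then have "kappa * q \<le> kappa * (d i - Q)" using kappa_pos by (intro mult_left_mono) auto
        moreover have "0 \<le> pi_s_min * q" using pis q ac by auto
        ultimately show ?thesis using False by (simp add: s_def al_def algebra_simps)
      qed
      have eq: "?U0 q = G q" if q: "q \<in> {a..c}" for q
        unfolding buyer_utility_def G_def
      proof (rule sum.cong[OF refl])
        fix i assume i: "i \<in> {1..I}"
        have "- pi_s_min * q + sat_loss kappa (Q + q - d i) - 0 = - (al i + s i * q)"
        proof (cases "d i - Q \<le> a")
          case True then show ?thesis using q by (simp add: s_def al_def sat_loss_def)
        next
          case False
          then have "c \<le> d i - Q" using key[of i a c] i ac by auto
          then have "sat_loss kappa (Q + q - d i) = kappa * (Q + q - d i)"
            using q by (cases "Q + q - d i = 0") (auto simp: sat_loss_def)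
          then show ?thesis using False by (simp add: s_def al_def algebra_simps)
        qed
        moreover have "- (al i + s i * q) \<le> 0" using nonneg[OF i q] by simp
        ultimately show "prob_weight mu (p i) * pt_value beta lam (- pi_s_min * q + sat_loss kappa (Q + q - d i) - 0)
            = prob_weight mu (p i) * (- lam * (al i + s i * q) powr beta)"
          using pt_value_neg[OF _ beta(1)] by (simp add: add.commute)
      qed
      have "convex_on {a..c} G"
        unfolding G_def
      proof (rule convex_piece)
        fix i q assume i: "i \<in> {1..I}" and q: "q \<in> {a..c}"
        show "0 \<le> al i + s i * q" using nonneg[OF i q] .
      qed (use lam beta w0 in auto)
      then have "G m \<le> max (G a) (G c)" using ac by (intro convex_on_le_max) auto
      then have "?U0 m \<le> max (?U0 a) (?U0 c)" using ac eq[of m] eq[of a] eq[of c] by auto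
      then obtain e where e: "e \<in> B" "0 \<le> e" "?U0 m \<le> ?U0 e"
        using ac by (cases "?U0 a \<le> ?U0 c") (auto simp: max_def)
      have "\<forall>qb\<ge>0. ?U0 qb \<le> ?U0 e" using m(2) e(3) order_trans by blast
      then show ?thesis using e by blast
    qed
  next
    obtain m where m: "m \<in> {0..D}" "\<And>q. q \<ge> 0 \<Longrightarrow> ?U1 q \<le> ?U1 m"
      using exists_max[OF cont D0 tail] by blast
    show "\<exists>qstar\<in>B \<union> {qb. 0 < qb \<and> (?U1 has_real_derivative 0) (at qb)}. 0 \<le> qstar \<and> (\<forall>qb\<ge>0. ?U1 qb \<le> ?U1 qstar)"
    proof (cases "m \<in> B")
      case True then show ?thesis using m by auto
    next
      case False
      obtain a c where ac: "a \<in> B" "c \<in> B" "0 \<le> a" "a < m" "m < c" "c \<le> D" "\<forall>b\<in>B. b \<le> a \<or> c \<le> b"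
        using bracket[OF finB B0 BD _ _ False] m(1) by auto
      define s where "s i = (if d i - Q \<le> a then 0 else kappa)" for i
      define x where "x i q = - pi_s_min * q + s i * (Q + q - d i) - kappa * (Q - d I)" for i q
      define H where "H q = (\<Sum>i=1..I. prob_weight mu (p i) * (x i q) powr beta)" for q
      have xpos: "0 < x i q" if i: "i \<in> {1..I}" and q: "q \<in> {a<..<c}" for i q
      proof (cases "d i - Q \<le> a")
        case True
        have "pi_s_min * q < kappa * q" using pis q ac by auto
        also have "\<dots> \<le> kappa * D" using q ac kappa_pos by auto
        finally show ?thesis using True by (simp add: x_def s_def D_def algebra_simps)
      next
        case False
        have "d i \<le> d I" using i dmono[of i I] by auto
        moreover have "0 < (kappa - pi_s_min) * q" using pis q ac by auto
        ultimately show ?thesis using False kappa_pos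
          by (simp add: x_def s_def algebra_simps) (smt (verit) mult_left_mono)
      qed
      have eq: "H q = ?U1 q" if q: "q \<in> {a<..<c}" for q
        unfolding buyer_utility_def H_def
      proof (rule sum.cong[OF refl])
        fix i assume i: "i \<in> {1..I}"
        have "- pi_s_min * q + sat_loss kappa (Q + q - d i) - kappa * (Q - d I) = x i q"
          using key[of i a c] i ac q unfolding s_def x_def sat_loss_def
          by auto
        then show "prob_weight mu (p i) * (x i q) powr beta
            = prob_weight mu (p i) * pt_value beta lam (- pi_s_min * q + sat_loss kappa (Q + q - d i) - kappa * (Q - d I))"
          using pt_value_pos[of "x i q"] xpos[OF i q] by simp
      qed
      have mI: "m \<in> {a<..<c}" using ac by auto
      have "\<exists>DD. (H has_real_derivative DD) (at m)"
        unfolding H_def x_def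
        by (rule exI, rule DERIV_sum, rule DERIV_cmult,
            rule has_real_derivative_powr[THEN DERIV_chain2])
           (use xpos[OF _ mI] in \<open>auto simp: x_def intro!: derivative_eq_intros\<close>)
      then obtain DD where DD: "(H has_real_derivative DD) (at m)" by blast
      then have DU: "(?U1 has_real_derivative DD) (at m)"
        by (rule has_field_derivative_transform_within_open[OF _ open_greaterThanLessThan mI]) (use eq in auto)
      have "DD = 0"
      proof (rule DERIV_local_max[OF DU])
        show "0 < m" using ac by auto
        show "\<forall>y. \<bar>m - y\<bar> < m \<longrightarrow> ?U1 y \<le> ?U1 m" using m(2) by auto
      qed
      then have "m \<in> {qb. 0 < qb \<and> (?U1 has_real_derivative 0) (at qb)}" using DU ac by auto
      then show ?thesis using m(2) ac by (intro bexI[of _ m]) auto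
    qed
  qed
qed

end
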